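(* Let $\mathcal{C}$ be a hereditary class of graphs. Suppose that every graph $H\in\mathcal{C}$ has a vertex $v$ such that $H[M_H(v)]$ is perfect. Then every $G\in\mathcal{C}$ is perfectly weight divisible, and hence perfectly divisible.
   Context: All graphs are finite and simple. A class of graphs is hereditary if it is closed under taking induced subgraphs. For a vertex $v$ of a graph $H$, $N_H(v)$ is the set of neighbours of $v$ and $M_H(v)=V(H)\setminus(N_H(v)\cup\{v\})$ is the set of non-neighbours of $v$. A graph $G$ is perfect if $\chi(H)=\omega(H)$ for every induced subgraph $H$ of $G$. A graph $G$ is perfectly divisible if for every induced subgraph $H$ of $G$, $V(H)$ can be partitioned into two sets $A,B$ such that $H[A]$ is perfect and $\omega(H[B])<\omega(H)$. A graph $G$ is perfectly weight divisible if for every nonnegative integer weight function $w$ on $V(G)$, there is a partition of $V(G)$ into two sets $S,T$ such that $G[S]$ is perfect and the maximum weight of a clique in $G[T]$ is smaller than the maximum weight of a clique in $G$ (the weight of a clique is the sum of the weights of its vertices). *)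

theory Defs
  imports Main
begin

text \<open>A finite simple graph is given by a finite vertex set V and a symmetric,
irreflexive adjacency relation E (only its restriction to V matters).
The induced subgraph on S \<subseteq> V is (S, E).\<close>

definition graph :: "'a set \<Rightarrow> ('a \<Rightarrow> 'a \<Rightarrow> bool) \<Rightarrow> bool" where
  "graph V E \<longleftrightarrow> finite V \<and> (\<forall>u\<in>V. \<forall>v\<in>V. E u v \<longleftrightarrow> E v u) \<and> (\<forall>v\<in>V. \<not> E v v)"

definition clique :: "'a set \<Rightarrow> ('a \<Rightarrow> 'a \<Rightarrow> bool) \<Rightarrow> 'a set \<Rightarrow> bool" where
  "clique V E K \<longleftrightarrow> K \<subseteq> V \<and> (\<forall>u\<in>K. \<forall>v\<in>K. u \<noteq> v \<longrightarrow> E u v)"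

definition clique_number :: "'a set \<Rightarrow> ('a \<Rightarrow> 'a \<Rightarrow> bool) \<Rightarrow> nat" where
  "clique_number V E = Max (card ` {K. clique V E K})"

definition proper_colouring :: "'a set \<Rightarrow> ('a \<Rightarrow> 'a \<Rightarrow> bool) \<Rightarrow> ('a \<Rightarrow> nat) \<Rightarrow> nat \<Rightarrow> bool" where
  "proper_colouring V E f k \<longleftrightarrow> (\<forall>v\<in>V. f v < k) \<and> (\<forall>u\<in>V. \<forall>v\<in>V. E u v \<longrightarrow> f u \<noteq> f v)"

definition chromatic_number :: "'a set \<Rightarrow> ('a \<Rightarrow> 'a \<Rightarrow> bool) \<Rightarrow> nat" where
  "chromatic_number V E = (LEAST k. \<exists>f. proper_colouring V E f k)"

definition perfect :: "'a set \<Rightarrow> ('a \<Rightarrow> 'a \<Rightarrow> bool) \<Rightarrow> bool" where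
  "perfect V E \<longleftrightarrow> (\<forall>S\<subseteq>V. chromatic_number S E = clique_number S E)"

text \<open>Maximum weight of a clique (the empty clique has weight 0).\<close>
definition max_clique_weight :: "'a set \<Rightarrow> ('a \<Rightarrow> 'a \<Rightarrow> bool) \<Rightarrow> ('a \<Rightarrow> nat) \<Rightarrow> nat" where
  "max_clique_weight V E w = Max ((\<lambda>K. sum w K) ` {K. clique V E K})"

definition non_nbrs :: "'a set \<Rightarrow> ('a \<Rightarrow> 'a \<Rightarrow> bool) \<Rightarrow> 'a \<Rightarrow> 'a set" where
  "non_nbrs V E v = {u \<in> V. u \<noteq> v \<and> \<not> E v u}"

text \<open>Graphs are taken to be nonempty, so the condition ranges over nonempty induced subgraphs.\<close>
definition perfectly_divisible :: "'a set \<Rightarrow> ('a \<Rightarrow> 'a \<Rightarrow> bool) \<Rightarrow> bool" where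
  "perfectly_divisible V E \<longleftrightarrow>
     (\<forall>S\<subseteq>V. S \<noteq> {} \<longrightarrow> (\<exists>A B. A \<union> B = S \<and> A \<inter> B = {} \<and> perfect A E
        \<and> clique_number B E < clique_number S E))"

text \<open>Weight functions that vanish on all of V give maximum clique weight 0, for which
the condition cannot hold; they are excluded.\<close>
definition perfectly_weight_divisible :: "'a set \<Rightarrow> ('a \<Rightarrow> 'a \<Rightarrow> bool) \<Rightarrow> bool" where
  "perfectly_weight_divisible V E \<longleftrightarrow>
     (\<forall>w :: 'a \<Rightarrow> nat. (\<exists>v\<in>V. w v > 0) \<longrightarrow>
        (\<exists>S T. S \<union> T = V \<and> S \<inter> T = {} \<and> perfect S E
           \<and> max_clique_weight T E w < max_clique_weight V E w))"

definition graph_class :: "('a set \<times> ('a \<Rightarrow> 'a \<Rightarrow> bool)) set \<Rightarrow> bool" where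
  "graph_class C \<longleftrightarrow> (\<forall>(V, E)\<in>C. graph V E)"

definition hereditary :: "('a set \<times> ('a \<Rightarrow> 'a \<Rightarrow> bool)) set \<Rightarrow> bool" where
  "hereditary C \<longleftrightarrow> (\<forall>(V, E)\<in>C. \<forall>S\<subseteq>V. (S, E) \<in> C)"

end

theory Submission
  imports Defs
begin

lemma cliques_fin: "finite V \<Longrightarrow> finite {K. clique V E K}"
  by (rule finite_subset[of _ "Pow V"]) (auto simp: clique_def)

lemma chrom_eq:
  assumes "v \<notin> S'" "S' \<noteq> {}" "\<forall>u\<in>S'. \<not> E v u \<and> \<not> E u v" "\<not> E v v"
  shows "chromatic_number (insert v S') E = chromatic_number S' E"
proof -
  have "\<And>k. (\<exists>f. proper_colouring (insert v S') E f k) \<longleftrightarrow> (\<exists>f. proper_colouring S' E f k)"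
  proof
    fix k assume "\<exists>f. proper_colouring (insert v S') E f k"
    then show "\<exists>f. proper_colouring S' E f k" unfolding proper_colouring_def by blast
  next
    fix k assume "\<exists>f. proper_colouring S' E f k"
    then obtain f where f: "proper_colouring S' E f k" by blast
    obtain u where u: "u \<in> S'" using assms(2) by blast
    have "k > 0" using f u unfolding proper_colouring_def by auto
    have "proper_colouring (insert v S') E (f(v:=0)) k"
      using f assms \<open>k > 0\<close> unfolding proper_colouring_def
      by (auto split: if_splits)
    then show "\<exists>f. proper_colouring (insert v S') E f k" by blast
  qed
  then show ?thesis unfolding chromatic_number_def by simp
qed

lemma clique_eq:
  assumes "v \<notin> S'" "S' \<noteq> {}" "\<forall>u\<in>S'. \<not> E v u"
  shows "card ` {K. clique (insert v S') E K} = card ` {K. clique S' E K}"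
proof
  obtain u where u: "u \<in> S'" using assms(2) by blast
  show "card ` {K. clique (insert v S') E K} \<subseteq> card ` {K. clique S' E K}"
  proof
    fix x assume "x \<in> card ` {K. clique (insert v S') E K}"
    then obtain K where K: "clique (insert v S') E K" "x = card K" by blast
    show "x \<in> card ` {K. clique S' E K}"
    proof (cases "v \<in> K")
      case True
      have "K = {v}"
      proof (rule ccontr)
        assume "K \<noteq> {v}"
        then obtain y where y: "y \<in> K" "y \<noteq> v" using True by blast
        have cK: "\<forall>a\<in>K. \<forall>b\<in>K. a \<noteq> b \<longrightarrow> E a b" using K unfolding clique_def by simp
        have "E v y" using cK True y by metis
        moreover have "y \<in> S'" using y K unfolding clique_def by blast
        ultimately show False using assms(3) by blast
      qed
      moreover have "clique S' E {u}" using u unfolding clique_def by auto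
      ultimately show ?thesis using K by (metis card.empty card_insert_disjoint empty_iff finite.emptyI image_eqI mem_Collect_eq)
    next
      case False
      then have "clique S' E K" using K unfolding clique_def by blast
      then show ?thesis using K by blast
    qed
  qed
next
  show "card ` {K. clique S' E K} \<subseteq> card ` {K. clique (insert v S') E K}"
    unfolding clique_def by blast
qed

lemma chrom_single: assumes "\<not> E v v" shows "chromatic_number {v} E = 1"
  unfolding chromatic_number_def
proof (rule Least_equality)
  show "\<exists>f. proper_colouring {v} E f 1"
    by (rule exI[of _ "\<lambda>_. 0"]) (simp add: proper_colouring_def assms)
next
  fix k assume "\<exists>f. proper_colouring {v} E f k"
  then show "1 \<le> k" unfolding proper_colouring_def by auto
qed

lemma clique_single: "clique_number {v} E = 1"
proof -
  have "{K. clique {v} E K} = {{}, {v}}" unfolding clique_def by auto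
  then show ?thesis unfolding clique_number_def by simp
qed

lemma perfect_insert:
  assumes g: "graph H E" and v: "v \<in> H" and p: "perfect (non_nbrs H E v) E"
  shows "perfect (insert v (non_nbrs H E v)) E"
  unfolding perfect_def
proof (intro allI impI)
  fix S assume S: "S \<subseteq> insert v (non_nbrs H E v)"
  show "chromatic_number S E = clique_number S E"
  proof (cases "v \<in> S")
    case False
    then have "S \<subseteq> non_nbrs H E v" using S by blast
    then show ?thesis using p unfolding perfect_def by blast
  next
    case True
    define S' where "S' = S - {v}"
    have S'sub: "S' \<subseteq> non_nbrs H E v" using S S'_def by blast
    have Seq: "S = insert v S'" using True S'_def by blast
    have vv: "\<not> E v v" using g v unfolding graph_def by blast
    have nb: "\<forall>u\<in>S'. \<not> E v u \<and> \<not> E u v"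
      using S'sub g v unfolding non_nbrs_def graph_def by blast
    show ?thesis
    proof (cases "S' = {}")
      case True
      then show ?thesis using Seq chrom_single[of E v, OF vv] clique_single[of v E] by simp
    next
      case False
      have "chromatic_number S E = chromatic_number S' E"
        using Seq chrom_eq[of v S' E] False nb vv S'_def by blast
      moreover have "clique_number S E = clique_number S' E"
        unfolding clique_number_def using Seq clique_eq[of v S' E] False nb S'_def by auto
      moreover have "chromatic_number S' E = clique_number S' E"
        using p S'sub unfolding perfect_def by blast
      ultimately show ?thesis by simp
    qed
  qed
qed

lemma sub_graph: "graph V E \<Longrightarrow> S \<subseteq> V \<Longrightarrow> graph S E"
  unfolding graph_def by (auto intro: finite_subset)

lemma pd:
  assumes g: "graph S E" and v: "v \<in> S" and p: "perfect (non_nbrs S E v) E"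
  shows "\<exists>A B. A \<union> B = S \<and> A \<inter> B = {} \<and> perfect A E
        \<and> clique_number B E < clique_number S E"
proof -
  define A where "A = insert v (non_nbrs S E v)"
  define B where "B = S - A"
  have fS: "finite S" using g unfolding graph_def by blast
  have fB: "finite B" using fS B_def by blast
  have AS: "A \<subseteq> S" using v unfolding A_def non_nbrs_def by blast
  obtain K where K: "clique B E K" "card K = clique_number B E"
  proof -
    have "clique_number B E \<in> card ` {K. clique B E K}"
      unfolding clique_number_def
      by (rule Max_in) (auto intro: cliques_fin[OF fB] simp: clique_def intro!: exI[of _ "{}"])
    then show ?thesis using that by (metis (mono_tags) imageE mem_Collect_eq)
  qed
  have vK: "v \<notin> K" using K A_def B_def unfolding clique_def by blast
  have fK: "finite K" using K fB unfolding clique_def by (blast intro: finite_subset)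
  have "clique S E (insert v K)"
  proof -
    have "\<forall>u\<in>K. E v u" using K unfolding clique_def B_def A_def non_nbrs_def by blast
    moreover have "\<forall>u\<in>K. E u v" using calculation g v K unfolding graph_def clique_def B_def by blast
    ultimately show ?thesis using K v unfolding clique_def B_def by blast
  qed
  then have "card (insert v K) \<in> card ` {K. clique S E K}" by blast
  then have "card (insert v K) \<le> clique_number S E"
    unfolding clique_number_def by (rule Max_ge[OF finite_imageI[OF cliques_fin[OF fS]]])
  then have "clique_number B E < clique_number S E" using K vK fK by simp
  moreover have "perfect A E" unfolding A_def by (rule perfect_insert[OF g v p])
  moreover have "A \<union> B = S" "A \<inter> B = {}" using AS B_def by blast+
  ultimately show ?thesis by blast
qed

lemma pwd:
  assumes C: "graph_class C" "hereditary C"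
    and h: "\<And>H E. (H, E) \<in> C \<Longrightarrow> H \<noteq> {} \<Longrightarrow> \<exists>v\<in>H. perfect (non_nbrs H E v) E"
    and VE: "(V, E) \<in> C"
  shows "perfectly_weight_divisible V E"
  unfolding perfectly_weight_divisible_def
proof (intro allI impI)
  fix w :: "'a \<Rightarrow> nat" assume "\<exists>v\<in>V. w v > 0"
  define H where "H = {u\<in>V. w u > 0}"
  have gV: "graph V E" using C VE unfolding graph_class_def by auto
  have fV: "finite V" using gV unfolding graph_def by blast
  have HV: "H \<subseteq> V" using H_def by blast
  have gH: "graph H E" using sub_graph[OF gV HV] .
  have "(H, E) \<in> C" using C VE HV unfolding hereditary_def by auto
  moreover have "H \<noteq> {}" using \<open>\<exists>v\<in>V. w v > 0\<close> H_def by blast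
  ultimately obtain v where v: "v \<in> H" and p: "perfect (non_nbrs H E v) E" using h by blast
  define S where "S = insert v (non_nbrs H E v)"
  define T where "T = V - S"
  have SV: "S \<subseteq> V" using v HV unfolding S_def non_nbrs_def by blast
  have fT: "finite T" using fV T_def by blast
  obtain K where K: "clique T E K" "sum w K = max_clique_weight T E w"
  proof -
    have "max_clique_weight T E w \<in> sum w ` {K. clique T E K}"
      unfolding max_clique_weight_def
      by (rule Max_in) (auto intro: cliques_fin[OF fT] simp: clique_def intro!: exI[of _ "{}"])
    then show ?thesis using that by (metis (mono_tags) imageE mem_Collect_eq)
  qed
  define K' where "K' = K \<inter> H"
  have fK: "finite K" using K fT unfolding clique_def by (blast intro: finite_subset)
  have vK: "v \<notin> K'" using K T_def S_def K'_def unfolding clique_def by blast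
  have fK': "finite K'" using fK K'_def by blast
  have sK: "sum w K = sum w K'"
  proof -
    have "sum w K = sum w K' + sum w (K - H)" unfolding K'_def
      using fK by (metis Int_Diff_Un Int_Diff_disjoint finite_Int finite_Diff sum.union_disjoint)
    moreover have "sum w (K - H) = 0"
    proof (rule sum.neutral)
      show "\<forall>x\<in>K - H. w x = 0" using K T_def unfolding H_def clique_def by auto
    qed
    ultimately show ?thesis by simp
  qed
  have "clique V E (insert v K')"
  proof -
    have "\<forall>u\<in>K'. E v u" using K unfolding clique_def T_def S_def K'_def non_nbrs_def by blast
    moreover have "\<forall>u\<in>K'. E u v" using calculation gV v HV K K'_def T_def
      unfolding graph_def clique_def by blast
    ultimately show ?thesis using K v HV unfolding clique_def K'_def T_def by blast
  qed
  then have "sum w (insert v K') \<in> sum w ` {K. clique V E K}" by blast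
  then have "sum w (insert v K') \<le> max_clique_weight V E w"
    unfolding max_clique_weight_def by (rule Max_ge[OF finite_imageI[OF cliques_fin[OF fV]]])
  moreover have "sum w (insert v K') = w v + sum w K'" using vK fK' by simp
  moreover have "w v > 0" using v H_def by blast
  ultimately have "max_clique_weight T E w < max_clique_weight V E w" using K sK by simp
  moreover have "perfect S E" unfolding S_def by (rule perfect_insert[OF gH v p])
  ultimately show "\<exists>S T. S \<union> T = V \<and> S \<inter> T = {} \<and> perfect S E
           \<and> max_clique_weight T E w < max_clique_weight V E w"
  proof (intro exI conjI)
    show "S \<union> T = V" using SV T_def by blast
    show "S \<inter> T = {}" using T_def by blast
  qed
qed

theorem theorem2p5:
  fixes C :: "('a set \<times> ('a \<Rightarrow> 'a \<Rightarrow> bool)) set"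
  assumes "graph_class C"
    and "hereditary C"
    and "\<And>H E. (H, E) \<in> C \<Longrightarrow> H \<noteq> {} \<Longrightarrow> \<exists>v\<in>H. perfect (non_nbrs H E v) E"
  shows "\<forall>(V, E)\<in>C. perfectly_weight_divisible V E \<and> perfectly_divisible V E"
proof (intro ballI, clarify, intro conjI)
  fix V E assume VE: "(V, E) \<in> C"
  show "perfectly_weight_divisible V E" using pwd[OF assms VE] .
  show "perfectly_divisible V E"
    unfolding perfectly_divisible_def
  proof (intro allI impI)
    fix S assume S: "S \<subseteq> V" "S \<noteq> {}"
    have SC: "(S, E) \<in> C" using assms(2) VE S unfolding hereditary_def by auto
    have gS: "graph S E" using assms(1) SC unfolding graph_class_def by auto
    obtain v where "v \<in> S" "perfect (non_nbrs S E v) E" using assms(3)[OF SC S(2)] by blast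
    then show "\<exists>A B. A \<union> B = S \<and> A \<inter> B = {} \<and> perfect A E
        \<and> clique_number B E < clique_number S E" using pd[OF gS] by blast
  qed
qed

end
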